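(* Let $a,n$ be positive integers and $Y=\mathrm{key}((a^n))$ (the rectangular tableau with $n$ rows whose $i$-th row consists of $a$ copies of $i$). Let $u$ and $v$ be words in the alphabet $[n]$ with contents $\alpha$ and $\beta$ respectively. The following are equivalent: (1) $vu\sim_K\mathrm{word}(Y)$; (2) $\alpha$ is a partition, $\alpha+\beta=(a^n)$, $u\sim_K\mathrm{word}(\mathrm{key}(\alpha))$ and $v\sim_K\mathrm{word}(\mathrm{key}(\beta))$.
   Context: $\sim_K$ is Knuth equivalence of words. Tableaux are in English notation; column-strict means rows weakly increase and columns strictly increase; $\mathrm{word}(T)=\dotsb u^2u^1$ where $u^i$ is the $i$-th row read left to right. The content of a word in $[n]$ is the vector $(c_1,\dots,c_n)$ with $c_i$ the number of letters $i$. For a composition $\gamma=(\gamma_1,\dots,\gamma_n)$ of nonnegative integers, let $\gamma^+$ be its decreasing rearrangement; the key tableau $\mathrm{key}(\gamma)$ is the unique column-strict tableau of shape $\gamma^+$ and content $\gamma$; explicitly its $j$-th column consists of the letters $i$ with $\gamma_i\ge j$. *)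

theory Defs
  imports Main
begin

text \<open>Words are lists of positive naturals. Elementary Knuth transformations
  (Fulton): y z x <-> y x z if x < y <= z; x z y <-> z x y if x <= y < z.\<close>

inductive knuth_step :: "nat list \<Rightarrow> nat list \<Rightarrow> bool" where
  K1: "x < y \<Longrightarrow> y \<le> z \<Longrightarrow> knuth_step (p @ [y, z, x] @ s) (p @ [y, x, z] @ s)"
| K2: "x \<le> y \<Longrightarrow> y < z \<Longrightarrow> knuth_step (p @ [x, z, y] @ s) (p @ [z, x, y] @ s)"

definition knuth_equiv :: "nat list \<Rightarrow> nat list \<Rightarrow> bool" where
  "knuth_equiv = equivclp knuth_step"

definition content :: "nat \<Rightarrow> nat list \<Rightarrow> nat list" where
  "content n w = map (\<lambda>i. count_list w i) [1..<n+1]"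

text \<open>A tableau is the list of its rows (top row first, English notation).
  word(T) = ... u^2 u^1.\<close>
definition tab_word :: "nat list list \<Rightarrow> nat list" where
  "tab_word T = concat (rev T)"

text \<open>Composition gamma = (gamma_1,...,gamma_n) as a list; gamma_i = gamma ! (i-1).
  The j-th column of key(gamma) consists of the letters i with gamma_i >= j.\<close>
definition key_col :: "nat list \<Rightarrow> nat \<Rightarrow> nat list" where
  "key_col \<gamma> j = filter (\<lambda>i. j \<le> \<gamma> ! (i - 1)) [1..<length \<gamma> + 1]"

definition key :: "nat list \<Rightarrow> nat list list" where
  "key \<gamma> = map (\<lambda>r. map (\<lambda>j. key_col \<gamma> j ! r)
                    (filter (\<lambda>j. r < length (key_col \<gamma> j)) [1..<Max (insert 0 (set \<gamma>)) + 1]))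
               [0..<length (key_col \<gamma> 1)]"

end

theory Submission
  imports Defs
begin


lemma ks_count: "knuth_step a b \<Longrightarrow> count_list a = count_list b"
  by (induction rule: knuth_step.induct) (auto simp: fun_eq_iff)

lemma ks_set: "knuth_step a b \<Longrightarrow> set a = set b"
  by (induction rule: knuth_step.induct) auto

lemma keq_count: "knuth_equiv a b \<Longrightarrow> count_list a = count_list b"
  unfolding knuth_equiv_def
  by (induction rule: equivclp_induct) (auto dest: ks_count)

lemma keq_set: "knuth_equiv a b \<Longrightarrow> set a = set b"
  unfolding knuth_equiv_def
  by (induction rule: equivclp_induct) (auto dest: ks_set)

lemma keq_refl[simp]: "knuth_equiv a a"
  by (simp add: knuth_equiv_def)

lemma keq_sym: "knuth_equiv a b \<Longrightarrow> knuth_equiv b a"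
  unfolding knuth_equiv_def by (rule equivclp_sym)

lemma keq_trans: "knuth_equiv a b \<Longrightarrow> knuth_equiv b c \<Longrightarrow> knuth_equiv a c"
  unfolding knuth_equiv_def by (rule equivclp_trans)

lemma keq_step: "knuth_step a b \<Longrightarrow> knuth_equiv a b"
  unfolding knuth_equiv_def by blast

lemma keq_map:
  assumes "knuth_equiv a b" "set a \<subseteq> A"
    and "\<And>x y. knuth_step x y \<Longrightarrow> set x \<subseteq> A \<Longrightarrow> knuth_equiv (f x) (f y)"
  shows "knuth_equiv (f a) (f b)"
  using assms(1) unfolding knuth_equiv_def
proof (induction rule: equivclp_induct)
  case base
  then show ?case by simp
next
  case (step y z)
  have sy: "set y \<subseteq> A" using keq_set[of a y] step(1) assms(2) by (simp add: knuth_equiv_def)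
  from step(2) show ?case
  proof
    assume "knuth_step y z"
    then have "knuth_equiv (f y) (f z)" using assms(3) sy by blast
    then show ?thesis using step(3) by (metis equivclp_trans knuth_equiv_def)
  next
    assume h: "knuth_step z y"
    then have "set z \<subseteq> A" using ks_set[OF h] sy by simp
    then have "knuth_equiv (f z) (f y)" using assms(3) h by blast
    then show ?thesis using step(3) by (metis equivclp_trans equivclp_sym knuth_equiv_def)
  qed
qed

lemma ks_cong: "knuth_step a b \<Longrightarrow> knuth_step (p @ a @ s) (p @ b @ s)"
proof (induction rule: knuth_step.induct)
  case (K1 x y z p' s')
  show ?case using knuth_step.K1[OF K1, of "p @ p'" "s' @ s"] by simp
next
  case (K2 x y z p' s')
  show ?case using knuth_step.K2[OF K2, of "p @ p'" "s' @ s"] by simp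
qed

lemma keq_cong: "knuth_equiv a b \<Longrightarrow> knuth_equiv (p @ a @ s) (p @ b @ s)"
  using keq_map[of a b UNIV "\<lambda>w. p @ w @ s"] ks_cong keq_step by blast

lemma keq_cons: "knuth_equiv a b \<Longrightarrow> knuth_equiv (x # a) (x # b)"
  using keq_cong[of a b "[x]" "[]"] by simp

lemma keq_app1: "knuth_equiv a b \<Longrightarrow> knuth_equiv (p @ a) (p @ b)"
  using keq_cong[of a b p "[]"] by simp

lemma keq_app2: "knuth_equiv a b \<Longrightarrow> knuth_equiv (a @ s) (b @ s)"
  using keq_cong[of a b "[]" s] by simp



definition okb :: "nat list \<Rightarrow> bool" where
  "okb s = (\<forall>i>0. count_list s (Suc i) \<le> count_list s i)"

fun ballot :: "nat list \<Rightarrow> bool" where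
  "ballot [] = True"
| "ballot (x # w) = (ballot w \<and> okb (x # w))"

lemma okb_count: "count_list s = count_list t \<Longrightarrow> okb s = okb t"
  by (simp add: okb_def)

lemma ballot_okb: "ballot w \<Longrightarrow> okb w"
  by (cases w) (auto simp: okb_def)

lemma ballot_append_cong:
  "ballot q1 = ballot q2 \<Longrightarrow> count_list q1 = count_list q2 \<Longrightarrow> ballot (p @ q1) = ballot (p @ q2)"
proof (induction p)
  case Nil then show ?case by simp
next
  case (Cons x p)
  have "okb (x # p @ q1) = okb (x # p @ q2)"
    by (rule okb_count) (simp add: fun_eq_iff Cons.prems(2))
  then show ?case using Cons by simp
qed

lemma ballot_iff: "ballot w = (\<forall>z s. w = z @ s \<longrightarrow> okb s)"
proof (induction w)
  case Nil then show ?case by (simp add: okb_def)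
next
  case (Cons x w)
  show ?case
  proof
    assume h: "ballot (x # w)"
    show "\<forall>z s. x # w = z @ s \<longrightarrow> okb s"
    proof (intro allI impI)
      fix z s assume "x # w = z @ s"
      then show "okb s" using h Cons.IH by (cases z) auto
    qed
  next
    assume h: "\<forall>z s. x # w = z @ s \<longrightarrow> okb s"
    have "okb (x # w)" using h[rule_format, of "[]"] by simp
    moreover have "\<forall>z s. w = z @ s \<longrightarrow> okb s"
      using h by (metis append_Cons)
    ultimately show "ballot (x # w)" using Cons.IH by simp
  qed
qed

lemma ballot_suffix: "ballot (v @ u) \<Longrightarrow> ballot u"
  by (induction v) auto

lemma ok_K1:
  assumes "okb s" "okb (x # z # s)" "okb (y # x # z # s)" "x < y" "y \<le> z"
  shows "okb (x # s) \<and> okb (z # s)"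
  unfolding okb_def
proof (intro conjI allI impI)
  fix i :: nat assume i: "0 < i"
  have a: "count_list s (Suc i) \<le> count_list s i" using assms(1) i by (simp add: okb_def)
  have b: "count_list (x # z # s) (Suc i) \<le> count_list (x # z # s) i" using assms(2) i unfolding okb_def by blast
  have c: "count_list (y # x # z # s) (Suc i) \<le> count_list (y # x # z # s) i" using assms(3) i unfolding okb_def by blast
  show "count_list (x # s) (Suc i) \<le> count_list (x # s) i"
    using a b c assms(4,5) by (auto split: if_splits)
  show "count_list (z # s) (Suc i) \<le> count_list (z # s) i"
    using a b c assms(4,5) by (auto split: if_splits)
qed

lemma ok_K2:
  assumes "okb s" "okb (y # s)" "okb (x # z # y # s)" "x \<le> y" "y < z"
  shows "okb (z # y # s) \<and> okb (x # y # s)"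
  unfolding okb_def
proof (intro conjI allI impI)
  fix i :: nat assume i: "0 < i"
  have a: "count_list s (Suc i) \<le> count_list s i" using assms(1) i by (simp add: okb_def)
  have b: "count_list (y # s) (Suc i) \<le> count_list (y # s) i" using assms(2) i unfolding okb_def by blast
  have c: "count_list (x # z # y # s) (Suc i) \<le> count_list (x # z # y # s) i" using assms(3) i unfolding okb_def by blast
  show "count_list (z # y # s) (Suc i) \<le> count_list (z # y # s) i"
    using a b c assms(4,5) by (auto split: if_splits)
  show "count_list (x # y # s) (Suc i) \<le> count_list (x # y # s) i"
    using a b c assms(4,5) by (auto split: if_splits)
qed

lemma ks_ballot: "knuth_step a b \<Longrightarrow> ballot a = ballot b"
proof (induction rule: knuth_step.induct)
  case (K1 x y z p s)
  have e1: "okb (z # x # s) = okb (x # z # s)" by (rule okb_count) (auto simp: fun_eq_iff)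
  have e2: "okb (y # z # x # s) = okb (y # x # z # s)" by (rule okb_count) (auto simp: fun_eq_iff)
  have "ballot ([y, z, x] @ s) = ballot ([y, x, z] @ s)"
    using ok_K1[of s x z y] K1 e1 e2 ballot_okb[of s] by auto
  moreover have "count_list ([y, z, x] @ s) = count_list ([y, x, z] @ s)" by (auto simp: fun_eq_iff)
  ultimately show ?case by (rule ballot_append_cong)
next
  case (K2 x y z p s)
  have e2: "okb (x # z # y # s) = okb (z # x # y # s)" by (rule okb_count) (auto simp: fun_eq_iff)
  have "ballot ([x, z, y] @ s) = ballot ([z, x, y] @ s)"
    using ok_K2[of s y x z] K2 e2 ballot_okb[of s] ballot_okb[of "y # s"] by auto
  moreover have "count_list ([x, z, y] @ s) = count_list ([z, x, y] @ s)" by (auto simp: fun_eq_iff)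
  ultimately show ?case by (rule ballot_append_cong)
qed

lemma keq_ballot: "knuth_equiv a b \<Longrightarrow> ballot a = ballot b"
  unfolding knuth_equiv_def
  by (induction rule: equivclp_induct) (auto dest: ks_ballot)

definition rc :: "nat \<Rightarrow> nat list \<Rightarrow> nat list" where
  "rc n w = rev (map (\<lambda>i. Suc n - i) w)"

lemma rc_app: "rc n (a @ b) = rc n b @ rc n a"
  by (simp add: rc_def)

lemma rc_rc: "set w \<subseteq> {1..n} \<Longrightarrow> rc n (rc n w) = w"
  by (induction w) (auto simp: rc_def)

lemma rc_set: "set w \<subseteq> {1..n} \<Longrightarrow> set (rc n w) \<subseteq> {1..n}"
  by (auto simp: rc_def subset_iff)

lemma ks_rc: "knuth_step a b \<Longrightarrow> set a \<subseteq> {1..n} \<Longrightarrow> knuth_equiv (rc n a) (rc n b)"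
proof (induction rule: knuth_step.induct)
  case (K1 x y z p s)
  let ?f = "\<lambda>i. Suc n - i"
  have st: "knuth_step (rc n s @ [?f z, ?f x, ?f y] @ rc n p) (rc n s @ [?f x, ?f z, ?f y] @ rc n p)"
    by (rule knuth_step.K2) (use K1 in auto)
  have "rc n (p @ [y, x, z] @ s) = rc n s @ [?f z, ?f x, ?f y] @ rc n p" by (simp add: rc_def)
  moreover have "rc n (p @ [y, z, x] @ s) = rc n s @ [?f x, ?f z, ?f y] @ rc n p" by (simp add: rc_def)
  ultimately show ?case using st keq_step keq_sym by metis
next
  case (K2 x y z p s)
  let ?f = "\<lambda>i. Suc n - i"
  have st: "knuth_step (rc n s @ [?f y, ?f x, ?f z] @ rc n p) (rc n s @ [?f y, ?f z, ?f x] @ rc n p)"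
    by (rule knuth_step.K1) (use K2 in auto)
  have "rc n (p @ [x, z, y] @ s) = rc n s @ [?f y, ?f z, ?f x] @ rc n p" by (simp add: rc_def)
  moreover have "rc n (p @ [z, x, y] @ s) = rc n s @ [?f y, ?f x, ?f z] @ rc n p" by (simp add: rc_def)
  ultimately show ?case using st keq_step keq_sym by metis
qed

lemma keq_rc: "knuth_equiv a b \<Longrightarrow> set a \<subseteq> {1..n} \<Longrightarrow> knuth_equiv (rc n a) (rc n b)"
  using keq_map[of a b "{1..n}" "rc n"] ks_rc by blast

lemma count_rc: "set w \<subseteq> {1..n} \<Longrightarrow> count_list (rc n w) y = (if 1 \<le> y \<and> y \<le> n then count_list w (Suc n - y) else 0)"
  by (induction w) (auto simp: rc_def)

lemma count_rc2: "set w \<subseteq> {1..n} \<Longrightarrow> 1 \<le> j \<Longrightarrow> j \<le> n \<Longrightarrow> count_list (rc n w) (Suc n - j) = count_list w j"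
proof -
  assume a: "set w \<subseteq> {1..n}" "1 \<le> j" "j \<le> n"
  then have "1 \<le> Suc n - j" "Suc n - j \<le> n" "Suc n - (Suc n - j) = j" by auto
  then show ?thesis using count_rc[OF a(1), of "Suc n - j"] by simp
qed

definition okp :: "nat \<Rightarrow> nat list \<Rightarrow> bool" where
  "okp n q = (\<forall>i. 0 < i \<longrightarrow> i < n \<longrightarrow> count_list q i \<le> count_list q (Suc i))"

lemma okb_rc: "set q \<subseteq> {1..n} \<Longrightarrow> okb (rc n q) = okp n q"
  unfolding okb_def okp_def
proof (intro iffI allI impI)
  assume s: "set q \<subseteq> {1..n}" and h: "\<forall>i>0. count_list (rc n q) (Suc i) \<le> count_list (rc n q) i"
  fix i assume i: "0 < i" "i < n"
  have "count_list (rc n q) (Suc (n - i)) \<le> count_list (rc n q) (n - i)" using h i by simp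
  moreover have "count_list (rc n q) (Suc (n - i)) = count_list q i"
    using count_rc2[OF s, of i] i by (simp add: Suc_diff_le)
  moreover have "count_list (rc n q) (n - i) = count_list q (Suc i)"
    using count_rc2[OF s, of "Suc i"] i by simp
  ultimately show "count_list q i \<le> count_list q (Suc i)" by simp
next
  assume s: "set q \<subseteq> {1..n}" and h: "\<forall>i. 0 < i \<longrightarrow> i < n \<longrightarrow> count_list q i \<le> count_list q (Suc i)"
  fix i :: nat assume i: "0 < i"
  show "count_list (rc n q) (Suc i) \<le> count_list (rc n q) i"
  proof (cases "Suc i \<le> n")
    case True
    then have "count_list q (n - i) \<le> count_list q (Suc (n - i))" using h i by simp
    moreover have "count_list (rc n q) (Suc i) = count_list q (n - i)"
      using count_rc2[OF s, of "n - i"] True i by simp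
    moreover have "count_list (rc n q) i = count_list q (Suc (n - i))"
      using count_rc2[OF s, of "Suc (n - i)"] True i by (simp add: Suc_diff_le)
    ultimately show ?thesis by simp
  next
    case False then show ?thesis by (simp add: count_rc[OF s])
  qed
qed

lemma ballot_rc: "set w \<subseteq> {1..n} \<Longrightarrow> ballot (rc n w) = (\<forall>q s. w = q @ s \<longrightarrow> okp n q)"
proof -
  assume s: "set w \<subseteq> {1..n}"
  have "ballot (rc n w) = (\<forall>z s. rc n w = z @ s \<longrightarrow> okb s)" by (rule ballot_iff)
  also have "\<dots> = (\<forall>q s. w = q @ s \<longrightarrow> okp n q)"
  proof
    assume h: "\<forall>z s. rc n w = z @ s \<longrightarrow> okb s"
    show "\<forall>q s. w = q @ s \<longrightarrow> okp n q"
    proof (intro allI impI)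
      fix q s' assume e: "w = q @ s'"
      then have "rc n w = rc n s' @ rc n q" by (simp add: rc_app)
      then have "okb (rc n q)" using h by blast
      then show "okp n q" using okb_rc[of q n] s e by auto
    qed
  next
    assume h: "\<forall>q s. w = q @ s \<longrightarrow> okp n q"
    show "\<forall>z s. rc n w = z @ s \<longrightarrow> okb s"
    proof (intro allI impI)
      fix z s' assume e: "rc n w = z @ s'"
      have w: "w = rc n s' @ rc n z"
      proof -
        have "w = rc n (rc n w)" using rc_rc[OF s] by simp
        also have "\<dots> = rc n s' @ rc n z" using e by (simp add: rc_app)
        finally show ?thesis .
      qed
      have sq: "set (rc n s') \<subseteq> {1..n}" using w s by auto
      have "set s' \<subseteq> set (rc n w)" using e by auto
      then have ss: "set s' \<subseteq> {1..n}" using rc_set[OF s] by auto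
      have "okp n (rc n s')" using h w by blast
      then have "okb (rc n (rc n s'))" using okb_rc[OF sq] by simp
      then show "okb s'" using rc_rc[OF ss] by simp
    qed
  qed
  finally show ?thesis .
qed



lemma zpow: "y < z \<Longrightarrow> knuth_equiv (replicate (Suc k) z @ [y]) (z # y # replicate k z)"
proof (induction k)
  case 0 then show ?case by simp
next
  case (Suc k)
  have "replicate (Suc (Suc k)) z @ [y] = z # (replicate (Suc k) z @ [y])" by simp
  moreover have "knuth_equiv (z # (replicate (Suc k) z @ [y])) (z # z # y # replicate k z)"
    using keq_cons[OF Suc.IH[OF Suc.prems]] by simp
  moreover have "knuth_equiv (z # z # y # replicate k z) (z # y # replicate (Suc k) z)"
    using keq_step[OF knuth_step.K1[of y z z "[]" "replicate k z"]] Suc.prems by simp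
  ultimately show ?case using keq_trans by simp
qed

lemma lemM:
  "x \<le> y \<Longrightarrow> y < z \<Longrightarrow> k \<le> k' \<Longrightarrow>
   knuth_equiv (x # replicate k z @ replicate k' y @ s) (replicate k z @ x # replicate k' y @ s)"
proof (induction k arbitrary: x k')
  case 0 then show ?case by simp
next
  case (Suc k)
  then obtain k'' where k': "k' = Suc k''" "k \<le> k''" by (cases k') auto
  have e1: "x # replicate (Suc k) z @ replicate k' y @ s = x # (replicate (Suc k) z @ [y]) @ replicate k'' y @ s"
    using k' by simp
  have s1: "knuth_equiv (x # (replicate (Suc k) z @ [y]) @ replicate k'' y @ s) (x # (z # y # replicate k z) @ replicate k'' y @ s)"
    using keq_cong[OF zpow[OF Suc.prems(2), of k], of "[x]" "replicate k'' y @ s"] by simp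
  have s2: "knuth_equiv (x # (z # y # replicate k z) @ replicate k'' y @ s) (z # x # y # replicate k z @ replicate k'' y @ s)"
    using keq_step[OF knuth_step.K2[of x y z "[]" "replicate k z @ replicate k'' y @ s"]] Suc.prems by simp
  have s3: "knuth_equiv (z # x # y # replicate k z @ replicate k'' y @ s) (z # x # replicate k z @ y # replicate k'' y @ s)"
    using keq_cong[OF Suc.IH[of y k'', OF _ Suc.prems(2) k'(2)], of "[z, x]" "[]"] by simp
  have s4: "knuth_equiv (z # x # replicate k z @ replicate k' y @ s) (z # replicate k z @ x # replicate k' y @ s)"
    using keq_cons[OF Suc.IH[of x k', OF Suc.prems(1,2)]] k' by simp
  have e2: "z # x # replicate k z @ y # replicate k'' y @ s = z # x # replicate k z @ replicate k' y @ s"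
    using k' by simp
  have e3: "z # replicate k z @ x # replicate k' y @ s = replicate (Suc k) z @ x # replicate k' y @ s" by simp
  have "knuth_equiv (x # replicate (Suc k) z @ replicate k' y @ s) (z # x # replicate k z @ replicate k' y @ s)"
    using keq_trans[OF keq_trans[OF s1 s2] s3] by (simp only: e1 e2)
  then show ?case using keq_trans[OF _ s4] by (simp only: e3)
qed

fun yw :: "(nat \<Rightarrow> nat) \<Rightarrow> nat \<Rightarrow> nat list" where
  "yw f 0 = []"
| "yw f (Suc k) = replicate (f (Suc k)) (Suc k) @ yw f k"

lemma yw_cong: "(\<And>i. 1 \<le> i \<Longrightarrow> i \<le> k \<Longrightarrow> f i = g i) \<Longrightarrow> yw f k = yw g k"
  by (induction k) auto

lemma yw_count: "count_list (yw f k) i = (if 1 \<le> i \<and> i \<le> k then f i else 0)"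
  by (induction k) (auto simp: count_list_eq_length_filter le_Suc_eq)

lemma yw_set: "set (yw f k) \<subseteq> {1..k}"
  by (induction k) auto

lemma yw_zero: "(\<And>i. f i = 0) \<Longrightarrow> yw f k = []"
  by (induction k) auto

lemma lemG:
  "1 \<le> x \<Longrightarrow> x \<le> k \<Longrightarrow> (\<And>i. x \<le> i \<Longrightarrow> i < k \<Longrightarrow> f (Suc i) \<le> f i) \<Longrightarrow>
   knuth_equiv (x # yw f k) (yw (f(x := Suc (f x))) k)"
proof (induction k)
  case 0 then show ?case by simp
next
  case (Suc k)
  show ?case
  proof (cases "x = Suc k")
    case True
    have e: "yw (f(x := Suc (f x))) k = yw f k" by (rule yw_cong) (use True in auto)
    have "yw (f(x := Suc (f x))) (Suc k) = replicate (Suc (f x)) x @ yw f k"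
      unfolding True by (simp only: yw.simps fun_upd_same e[unfolded True])
    moreover have "x # yw f (Suc k) = replicate (Suc (f x)) x @ yw f k" using True by simp
    ultimately show ?thesis by (metis keq_refl)
  next
    case False
    then have xk: "x \<le> k" using Suc.prems by simp
    then obtain k0 where k0: "k = Suc k0" using Suc.prems(1) by (cases k) auto
    have le: "f (Suc k) \<le> f k" using Suc.prems(3)[of k] xk by simp
    have "x # yw f (Suc k) = x # replicate (f (Suc k)) (Suc k) @ replicate (f k) k @ yw f k0"
      using k0 by simp
    moreover have "knuth_equiv (x # replicate (f (Suc k)) (Suc k) @ replicate (f k) k @ yw f k0)
       (replicate (f (Suc k)) (Suc k) @ x # replicate (f k) k @ yw f k0)"
      by (rule lemM) (use xk le in auto)
    moreover have "x # replicate (f k) k @ yw f k0 = x # yw f k" using k0 by simp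
    moreover have "knuth_equiv (replicate (f (Suc k)) (Suc k) @ x # yw f k) (replicate (f (Suc k)) (Suc k) @ yw (f(x := Suc (f x))) k)"
      by (rule keq_app1, rule Suc.IH) (use Suc.prems xk in auto)
    moreover have "replicate (f (Suc k)) (Suc k) @ yw (f(x := Suc (f x))) k = yw (f(x := Suc (f x))) (Suc k)"
      using False by simp
    ultimately show ?thesis using keq_trans by metis
  qed
qed

lemma lemL: "ballot w \<Longrightarrow> set w \<subseteq> {1..n} \<Longrightarrow> knuth_equiv w (yw (count_list w) n)"
proof (induction w)
  case Nil then show ?case by (simp add: yw_zero)
next
  case (Cons x w)
  have bw: "ballot w" using Cons.prems by simp
  have ih: "knuth_equiv (x # w) (x # yw (count_list w) n)" using Cons bw by (simp add: keq_cons)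
  have ok: "okb w" by (rule ballot_okb[OF bw])
  have x: "1 \<le> x" "x \<le> n" using Cons.prems by auto
  have "knuth_equiv (x # yw (count_list w) n) (yw ((count_list w)(x := Suc (count_list w x))) n)"
    by (rule lemG) (use x ok in \<open>auto simp: okb_def\<close>)
  moreover have "(count_list w)(x := Suc (count_list w x)) = count_list (x # w)" by (auto simp: fun_eq_iff)
  ultimately show ?case using ih keq_trans by metis
qed

lemma ballot_rep:
  "ballot w \<Longrightarrow> count_list w c = 0 \<Longrightarrow> count_list w (Suc c) = 0 \<Longrightarrow>
   (c = 1 \<or> j \<le> count_list w (c - 1)) \<Longrightarrow> ballot (replicate j c @ w)"
proof (induction j)
  case 0 then show ?case by simp
next
  case (Suc j)
  have b: "ballot (replicate j c @ w)" using Suc by auto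
  have "okb (c # replicate j c @ w)"
    unfolding okb_def
  proof (intro allI impI)
    fix i :: nat assume i: "0 < i"
    have o: "count_list w (Suc i) \<le> count_list w i" using ballot_okb[OF Suc.prems(1)] i by (simp add: okb_def)
    show "count_list (c # replicate j c @ w) (Suc i) \<le> count_list (c # replicate j c @ w) i"
      using o Suc.prems(2,3,4) i
      by (cases "c = Suc i"; cases "c = i") (auto simp: count_list_eq_length_filter)
  qed
  then show ?case using b by simp
qed

lemma yw_ballot: "(\<And>i. 0 < i \<Longrightarrow> i < k \<Longrightarrow> f (Suc i) \<le> f i) \<Longrightarrow> ballot (yw f k)"
proof (induction k)
  case 0 then show ?case by simp
next
  case (Suc k)
  have b: "ballot (yw f k)" using Suc by auto
  show ?case
    using ballot_rep[OF b, of "Suc k" "f (Suc k)"] Suc.prems[of k] by (auto simp: yw_count)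
qed



lemma filter_up:
  "(\<And>i j. lo \<le> i \<Longrightarrow> i \<le> j \<Longrightarrow> j < hi \<Longrightarrow> P i \<Longrightarrow> P j) \<Longrightarrow>
   filter P [lo..<hi] = [hi - length (filter P [lo..<hi])..<hi]"
proof (induction hi)
  case 0 then show ?case by simp
next
  case (Suc hi)
  show ?case
  proof (cases "lo \<le> hi")
    case False then show ?thesis by simp
  next
    case True
    have ih: "filter P [lo..<hi] = [hi - length (filter P [lo..<hi])..<hi]"
      by (rule Suc.IH) (use Suc.prems in auto)
    show ?thesis
    proof (cases "P hi")
      case True
      have "length (filter P [lo..<hi]) \<le> hi" 
        using length_filter_le[of P "[lo..<hi]"] by simp
      then show ?thesis using True \<open>lo \<le> hi\<close> ih
        by (simp add: upt_Suc_append)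
    next
      case False
      have "filter P [lo..<hi] = []"
        using Suc.prems[of _ hi] False by (force simp: filter_empty_conv)
      then show ?thesis using False \<open>lo \<le> hi\<close> by simp
    qed
  qed
qed

lemma filter_down:
  "(\<And>i j. lo \<le> i \<Longrightarrow> i \<le> j \<Longrightarrow> j < hi \<Longrightarrow> P j \<Longrightarrow> P i) \<Longrightarrow>
   filter P [lo..<hi] = [lo..<lo + length (filter P [lo..<hi])]"
proof (induction hi)
  case 0 then show ?case by simp
next
  case (Suc hi)
  show ?case
  proof (cases "lo \<le> hi")
    case False then show ?thesis by simp
  next
    case True
    have ih: "filter P [lo..<hi] = [lo..<lo + length (filter P [lo..<hi])]"
      by (rule Suc.IH) (use Suc.prems in auto)
    show ?thesis
    proof (cases "P hi")
      case True
      have "filter P [lo..<hi] = [lo..<hi]"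
        using Suc.prems[of _ hi] True by (auto simp: filter_id_conv)
      then show ?thesis using True \<open>lo \<le> hi\<close> by simp
    next
      case False
      then show ?thesis using \<open>lo \<le> hi\<close> ih by simp
    qed
  qed
qed

lemma filter_le_upt: "b \<le> M \<Longrightarrow> filter (\<lambda>j. j \<le> b) [Suc 0..<Suc M] = [Suc 0..<Suc b]"
proof (induction M)
  case 0 then show ?case by simp
next
  case (Suc M)
  show ?case
  proof (cases "b \<le> M")
    case True then show ?thesis using Suc by simp
  next
    case False
    then have "b = Suc M" using Suc.prems by simp
    then show ?thesis by (auto simp: filter_id_conv)
  qed
qed

lemma len_filter_add:
  "(\<And>x. x \<in> set xs \<Longrightarrow> (C x \<longleftrightarrow> A x \<or> B x) \<and> \<not> (A x \<and> B x)) \<Longrightarrow>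
   length (filter A xs) + length (filter B xs) = length (filter C xs)"
  by (induction xs) auto

lemma len_filter_mono:
  "(\<And>x. x \<in> set xs \<Longrightarrow> P x \<Longrightarrow> Q x) \<Longrightarrow> length (filter P xs) \<le> length (filter Q xs)"
  by (induction xs) auto

lemma count_map_filter:
  "count_list (map h (filter P xs)) y = length (filter (\<lambda>x. P x \<and> h x = y) xs)"
  by (induction xs) auto

lemma yw_alt: "yw f k = concat (map (\<lambda>r. replicate (f (Suc r)) (Suc r)) (rev [0..<k]))"
  by (induction k) auto

lemma key_part:
  assumes srt: "sorted_wrt (\<ge>) \<alpha>"
  shows "tab_word (key \<alpha>) = yw (\<lambda>i. \<alpha> ! (i - 1)) (length \<alpha>)"
proof -
  define n where "n = length \<alpha>"
  define M where "M = Max (insert 0 (set \<alpha>))"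
  define c where "c j = length (key_col \<alpha> j)" for j
  have colD: "key_col \<alpha> j = [1..<1 + c j]" for j
    unfolding c_def key_col_def
  proof (rule filter_down)
    fix i i' assume h: "1 \<le> i" "i \<le> i'" "i' < length \<alpha> + 1" "j \<le> \<alpha> ! (i' - 1)"
    have "\<alpha> ! (i' - 1) \<le> \<alpha> ! (i - 1)"
    proof (cases "i = i'")
      case False
      then show ?thesis using srt h by (auto simp: sorted_wrt_iff_nth_less)
    qed simp
    then show "j \<le> \<alpha> ! (i - 1)" using h by simp
  qed
  have cn: "c j \<le> n" for j
  proof -
    have "c j \<le> length [1..<length \<alpha> + 1]" unfolding c_def key_col_def by (rule length_filter_le)
    then show ?thesis by (simp only: length_upt n_def)
  qed
  have mem: "(r < c j) = (j \<le> \<alpha> ! r)" if r: "r < n" for r j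
  proof -
    have "(Suc r \<in> set (key_col \<alpha> j)) = (r < c j)" by (subst colD) auto
    moreover have "(Suc r \<in> set (key_col \<alpha> j)) = (j \<le> \<alpha> ! r)" using r
      unfolding key_col_def n_def set_filter set_upt by simp
    ultimately show ?thesis by simp
  qed
  have aM: "\<alpha> ! r \<le> M" if "r < n" for r
    unfolding M_def using that n_def by (intro Max_ge) auto
  have row: "map (\<lambda>j. key_col \<alpha> j ! r) (filter (\<lambda>j. r < length (key_col \<alpha> j)) [1..<M + 1])
        = replicate (\<alpha> ! r) (Suc r)" if r: "r < c 1" for r
  proof -
    have rn: "r < n" using r cn[of 1] by simp
    have f: "filter (\<lambda>j. r < length (key_col \<alpha> j)) [1..<M + 1] = [1..<Suc (\<alpha> ! r)]"
    proof -
      have "filter (\<lambda>j. r < length (key_col \<alpha> j)) [1..<M + 1] = filter (\<lambda>j. j \<le> \<alpha> ! r) [1..<M + 1]"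
      proof (rule filter_cong[OF refl])
        fix j show "(r < length (key_col \<alpha> j)) = (j \<le> \<alpha> ! r)" using mem[OF rn, of j] by (simp only: c_def)
      qed
      also have "\<dots> = [Suc 0..<Suc (\<alpha> ! r)]" using filter_le_upt[OF aM[OF rn]] by simp
      finally show ?thesis by simp
    qed
    have m1: "map (\<lambda>j. key_col \<alpha> j ! r) [1..<Suc (\<alpha> ! r)] = map (\<lambda>j. Suc r) [1..<Suc (\<alpha> ! r)]"
    proof (rule map_cong[OF refl])
      fix j assume "j \<in> set [1..<Suc (\<alpha> ! r)]"
      then have "j \<le> \<alpha> ! r" by auto
      then have "r < c j" using mem[OF rn, of j] by (simp only:)
      then have "1 + r < 1 + c j" by simp
      then show "key_col \<alpha> j ! r = Suc r" by (simp only: colD nth_upt)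
    qed
    have m2: "map (\<lambda>j. Suc r) [1..<Suc (\<alpha> ! r)] = replicate (\<alpha> ! r) (Suc r)"
      by (simp add: map_replicate_const del: upt_Suc)
    show ?thesis by (simp only: f m1 m2)
  qed
  have k: "key \<alpha> = map (\<lambda>r. replicate (\<alpha> ! r) (Suc r)) [0..<c 1]"
    unfolding key_def M_def[symmetric]
    apply (rule map_cong)
     apply (simp add: c_def)
    apply (rule row)
    apply simp
    done
  have tw: "tab_word (key \<alpha>) = concat (map (\<lambda>r. replicate (\<alpha> ! r) (Suc r)) (rev [0..<c 1]))"
    unfolding tab_word_def k by (simp only: rev_map)
  have z: "\<alpha> ! r = 0" if "c 1 \<le> r" "r < n" for r
    using mem[OF that(2), of 1] that by simp
  have split: "[0..<n] = [0..<c 1] @ [c 1..<n]"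
    using upt_add_eq_append[of 0 "c 1" "n - c 1"] cn[of 1] by simp
  have "yw (\<lambda>i. \<alpha> ! (i - 1)) n = concat (map (\<lambda>r. replicate (\<alpha> ! r) (Suc r)) (rev [0..<n]))"
    by (simp add: yw_alt)
  also have "\<dots> = concat (map (\<lambda>r. replicate (\<alpha> ! r) (Suc r)) (rev [c 1..<n])) @
                   concat (map (\<lambda>r. replicate (\<alpha> ! r) (Suc r)) (rev [0..<c 1]))"
    by (subst split) simp
  also have "concat (map (\<lambda>r. replicate (\<alpha> ! r) (Suc r)) (rev [c 1..<n])) = []"
    using z by auto
  finally show ?thesis using tw n_def by simp
qed



lemma key_inc:
  assumes srt: "sorted_wrt (\<le>) \<beta>" and nl: "n = length \<beta>"
  shows "set (tab_word (key \<beta>)) \<subseteq> {1..n}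
       \<and> (\<forall>i. 1 \<le> i \<longrightarrow> i \<le> n \<longrightarrow> count_list (tab_word (key \<beta>)) i = \<beta> ! (i - 1))
       \<and> (\<forall>q s. tab_word (key \<beta>) = q @ s \<longrightarrow> okp n q)"
proof -
  define M where "M = Max (insert 0 (set \<beta>))"
  define c where "c j = length (key_col \<beta> j)" for j
  have colU: "key_col \<beta> j = [Suc n - c j..<Suc n]" for j
  proof -
    have "key_col \<beta> j = [length \<beta> + 1 - c j..<length \<beta> + 1]"
      unfolding c_def key_col_def
    proof (rule filter_up)
      fix i i' assume h: "1 \<le> i" "i \<le> i'" "i' < length \<beta> + 1" "j \<le> \<beta> ! (i - 1)"
      have "\<beta> ! (i - 1) \<le> \<beta> ! (i' - 1)"
      proof (cases "i = i'")
        case False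
        then show ?thesis using srt h by (auto simp: sorted_wrt_iff_nth_less)
      qed simp
      then show "j \<le> \<beta> ! (i' - 1)" using h by simp
    qed
    then show ?thesis using nl by simp
  qed
  have cn: "c j \<le> n" for j
  proof -
    have "c j \<le> length [1..<length \<beta> + 1]" unfolding c_def key_col_def by (rule length_filter_le)
    then show ?thesis by (simp only: length_upt nl)
  qed
  have nth: "key_col \<beta> j ! r = Suc n - c j + r" if "r < c j" for j r
  proof -
    have "Suc n - c j + r < Suc n" using that cn[of j] by simp
    then show ?thesis by (simp only: colU nth_upt)
  qed
  have cmono: "c j' \<le> c j" if "j \<le> j'" for j j'
    unfolding c_def key_col_def by (rule len_filter_mono) (use that in auto)
  have memi: "(Suc n - c j \<le> i) = (j \<le> \<beta> ! (i - 1))" if "1 \<le> i" "i \<le> n" for i j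
  proof -
    have "(i \<in> set (key_col \<beta> j)) = (Suc n - c j \<le> i)" using that by (subst colU) auto
    moreover have "(i \<in> set (key_col \<beta> j)) = (j \<le> \<beta> ! (i - 1))" using that nl
      unfolding key_col_def set_filter set_upt by auto
    ultimately show ?thesis by simp
  qed
  define row where "row r = map (\<lambda>j. key_col \<beta> j ! r) (filter (\<lambda>j. r < length (key_col \<beta> j)) [1..<M + 1])" for r
  have rowE: "row r = map (\<lambda>j. Suc n - c j + r) (filter (\<lambda>j. r < c j) [1..<M + 1])" for r
    unfolding row_def c_def[symmetric]
    by (rule map_cong[OF refl]) (simp add: nth)
  have kb: "key \<beta> = map row [0..<c 1]"
    unfolding key_def row_def M_def c_def ..
  define W where "W r = concat (map row (rev [r..<c 1]))" for r
  have tw: "tab_word (key \<beta>) = W 0"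
    unfolding tab_word_def kb W_def by (simp only: rev_map concat_map_singleton)
  have Wstep: "W r = W (Suc r) @ row r" if "r < c 1" for r
    unfolding W_def using that by (simp add: upt_conv_Cons)
  have crow: "count_list (row r) i = length (filter (\<lambda>j. r < c j \<and> Suc n - c j + r = i) [1..<M + 1])" for r i
    unfolding rowE by (rule count_map_filter)
  have srow: "set (row r) \<subseteq> {1..n}" for r
  proof -
    have "Suc n - c j + r \<in> {1..n}" if "r < c j" for j using cn[of j] that by auto
    then show ?thesis unfolding rowE by (auto simp del: upt_Suc)
  qed
  define P where "P r = ((\<forall>i. 1 \<le> i \<longrightarrow> i \<le> n \<longrightarrow> count_list (W r) i = length (filter (\<lambda>j. Suc n - c j + r \<le> i) [1..<M + 1]))
      \<and> (\<forall>q s. W r = q @ s \<longrightarrow> okp n q) \<and> set (W r) \<subseteq> {1..n})" for r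
  have "P 0"
  proof (rule inc_induct[of 0 "c 1"])
    show "0 \<le> c 1" by simp
  next
    have cnt: "length (filter (\<lambda>j. Suc n - c j + c 1 \<le> i) [1..<M + 1]) = 0" if "i \<le> n" for i
    proof -
      have "\<not> (Suc n - c j + c 1 \<le> i)" if j: "j \<in> set [1..<M + 1]" for j
      proof -
        have "1 \<le> j" using j by auto
        then have "c j \<le> c 1" by (rule cmono)
        moreover have "c j \<le> n" by (rule cn)
        ultimately show ?thesis using \<open>i \<le> n\<close> by arith
      qed
      then show ?thesis by (simp only: length_0_conv filter_empty_conv) blast
    qed
    have w0: "W (c 1) = []" unfolding W_def by simp
    show "P (c 1)" unfolding P_def w0 using cnt by (auto simp: okp_def)
  next
    fix r assume r: "0 \<le> r" "r < c 1" and ih: "P (Suc r)"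
    have ihc: "count_list (W (Suc r)) i = length (filter (\<lambda>j. Suc n - c j + Suc r \<le> i) [1..<M + 1])"
      if "1 \<le> i" "i \<le> n" for i using ih that unfolding P_def by blast
    have ihp: "okp n q" if "W (Suc r) = q @ s" for q s using ih that unfolding P_def by blast
    have ihs: "set (W (Suc r)) \<subseteq> {1..n}" using ih unfolding P_def by blast
    have cW: "count_list (W r) i = length (filter (\<lambda>j. Suc n - c j + r \<le> i) [1..<M + 1])"
      if i: "1 \<le> i" "i \<le> n" for i
    proof -
      have "count_list (W r) i = count_list (W (Suc r)) i + count_list (row r) i"
        using Wstep[OF r(2)] by simp
      also have "\<dots> = length (filter (\<lambda>j. Suc n - c j + Suc r \<le> i) [1..<M + 1])
                     + length (filter (\<lambda>j. r < c j \<and> Suc n - c j + r = i) [1..<M + 1])"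
        using ihc[OF i] crow by simp
      also have "\<dots> = length (filter (\<lambda>j. Suc n - c j + r \<le> i) [1..<M + 1])"
        by (rule len_filter_add) (use cn i in auto)
      finally show ?thesis .
    qed
    have cW2: "count_list (W (Suc r)) (Suc i) = count_list (W r) i" if i: "1 \<le> i" "i < n" for i
      using ihc[of "Suc i"] cW[of i] i by simp
    have pW: "okp n q" if e: "W r = q @ s" for q s
    proof -
      have "W (Suc r) @ row r = q @ s" using e Wstep[OF r(2)] by simp
      then obtain us where "(W (Suc r) = q @ us \<and> us @ row r = s) \<or> (W (Suc r) @ us = q \<and> row r = us @ s)"
        using append_eq_append_conv2[THEN iffD1] by blast
      then show ?thesis
      proof
        assume "W (Suc r) = q @ us \<and> us @ row r = s"
        then show ?thesis using ihp by blast
      next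
        assume h: "W (Suc r) @ us = q \<and> row r = us @ s"
        show ?thesis unfolding okp_def
        proof (intro allI impI)
          fix i assume i: "0 < i" "i < n"
          have "count_list us i \<le> count_list (row r) i" using h by simp
          then have "count_list q i \<le> count_list (W r) i" using h Wstep[OF r(2)] by auto
          also have "\<dots> = count_list (W (Suc r)) (Suc i)" using cW2[of i] i by simp
          also have "\<dots> \<le> count_list q (Suc i)" using h by auto
          finally show "count_list q i \<le> count_list q (Suc i)" .
        qed
      qed
    qed
    have sW: "set (W r) \<subseteq> {1..n}" using ihs srow[of r] Wstep[OF r(2)] by simp
    show "P r" unfolding P_def using cW pW sW by blast
  qed
  then have p0: "(\<forall>i. 1 \<le> i \<longrightarrow> i \<le> n \<longrightarrow> count_list (W 0) i = length (filter (\<lambda>j. Suc n - c j \<le> i) [1..<M + 1]))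
      \<and> (\<forall>q s. W 0 = q @ s \<longrightarrow> okp n q) \<and> set (W 0) \<subseteq> {1..n}" unfolding P_def by simp
  have bM: "\<beta> ! (i - 1) \<le> M" if "1 \<le> i" "i \<le> n" for i
    unfolding M_def using that nl by (intro Max_ge) auto
  have fin: "length (filter (\<lambda>j. Suc n - c j \<le> i) [1..<M + 1]) = \<beta> ! (i - 1)" if i: "1 \<le> i" "i \<le> n" for i
  proof -
    have "filter (\<lambda>j. Suc n - c j \<le> i) [1..<M + 1] = filter (\<lambda>j. j \<le> \<beta> ! (i - 1)) [Suc 0..<Suc M]"
      using memi[OF i] by simp
    also have "\<dots> = [Suc 0..<Suc (\<beta> ! (i - 1))]" by (rule filter_le_upt[OF bM[OF i]])
    finally show ?thesis by simp
  qed
  show ?thesis using p0 fin unfolding tw by simp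
qed



lemma content_len[simp]: "length (content n u) = n"
  by (simp add: content_def)

lemma content_nth: "i < n \<Longrightarrow> content n u ! i = count_list u (Suc i)"
  by (simp add: content_def del: upt_Suc)

lemma chain_le:
  assumes h: "\<And>i. 0 < i \<Longrightarrow> f (Suc i) \<le> (f i :: nat)" and i: "0 < i" and ij: "i \<le> j"
  shows "f j \<le> f i"
  using ij
proof (induction j rule: dec_induct)
  case base then show ?case by simp
next
  case (step j)
  have "f (Suc j) \<le> f j" using h[of j] step(1) i by simp
  then show ?case using step(3) by simp
qed

lemma okb_sorted: "okb u \<Longrightarrow> sorted_wrt (\<ge>) (content n u)"
proof -
  assume o: "okb u"
  have "count_list u (Suc j) \<le> count_list u (Suc i)" if "i \<le> j" for i j
    by (rule chain_le[where f = "count_list u"]) (use o that in \<open>auto simp: okb_def\<close>)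
  then show ?thesis by (auto simp: sorted_wrt_iff_nth_less content_nth)
qed

lemma sorted_adj: "sorted_wrt (\<ge>) \<alpha> \<Longrightarrow> 0 < i \<Longrightarrow> i < length \<alpha> \<Longrightarrow> \<alpha> ! i \<le> \<alpha> ! (i - 1)"
  by (auto simp: sorted_wrt_iff_nth_less)

lemma map2_iff:
  "(map2 (+) (content n u) (content n v) = replicate n a) =
   (\<forall>i. 1 \<le> i \<longrightarrow> i \<le> n \<longrightarrow> count_list u i + count_list v i = a)"
proof
  assume h: "map2 (+) (content n u) (content n v) = replicate n a"
  show "\<forall>i. 1 \<le> i \<longrightarrow> i \<le> n \<longrightarrow> count_list u i + count_list v i = a"
  proof (intro allI impI)
    fix i assume i: "1 \<le> i" "i \<le> n"
    have "map2 (+) (content n u) (content n v) ! (i - 1) = replicate n a ! (i - 1)" using h by simp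
    then show "count_list u i + count_list v i = a" using i by (simp add: content_nth)
  qed
next
  assume h: "\<forall>i. 1 \<le> i \<longrightarrow> i \<le> n \<longrightarrow> count_list u i + count_list v i = a"
  show "map2 (+) (content n u) (content n v) = replicate n a"
  proof (rule nth_equalityI)
    fix i assume "i < length (map2 (+) (content n u) (content n v))"
    then have i: "i < n" by simp
    then show "map2 (+) (content n u) (content n v) ! i = replicate n a ! i"
      using h[rule_format, of "Suc i"] by (simp add: content_nth)
  qed simp
qed

lemma glue:
  assumes bu: "ballot u" and pv: "\<forall>q s. v = q @ s \<longrightarrow> okp n q"
    and cnt: "\<forall>i. 1 \<le> i \<longrightarrow> i \<le> n \<longrightarrow> count_list u i + count_list v i = a"
    and sv: "set v \<subseteq> {1..n}" and su: "set u \<subseteq> {1..n}"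
  shows "ballot (v @ u)"
  unfolding ballot_iff
proof (intro allI impI)
  fix z s assume "v @ u = z @ s"
  then obtain us where "(v = z @ us \<and> us @ u = s) \<or> (v @ us = z \<and> u = us @ s)"
    using append_eq_append_conv2[THEN iffD1] by blast
  then show "okb s"
  proof
    assume h: "v = z @ us \<and> us @ u = s"
    show "okb s" unfolding okb_def
    proof (intro allI impI)
      fix i :: nat assume i: "0 < i"
      show "count_list s (Suc i) \<le> count_list s i"
      proof (cases "i < n")
        case True
        have "count_list z i \<le> count_list z (Suc i)" using pv h i True unfolding okp_def by blast
        moreover have "count_list u i + count_list v i = a" "count_list u (Suc i) + count_list v (Suc i) = a"
          using cnt i True by auto
        moreover have "count_list v i = count_list z i + count_list us i"
          "count_list v (Suc i) = count_list z (Suc i) + count_list us (Suc i)" using h by auto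
        ultimately show ?thesis using h by auto
      next
        case False
        have "set s \<subseteq> {1..n}" using h sv su by (auto simp: subset_iff)
        then have "Suc i \<notin> set s" using False by auto
        then show ?thesis by simp
      qed
    qed
  next
    assume h: "v @ us = z \<and> u = us @ s"
    then show "okb s" using bu unfolding ballot_iff by blast
  qed
qed

lemma split_v:
  assumes b: "ballot (v @ u)"
    and cnt: "\<forall>i. 1 \<le> i \<longrightarrow> i \<le> n \<longrightarrow> count_list u i + count_list v i = a"
  shows "\<forall>q s. v = q @ s \<longrightarrow> okp n q"
proof (intro allI impI)
  fix q s assume h: "v = q @ s"
  then have "okb (s @ u)" using b unfolding ballot_iff by (metis append.assoc)
  then show "okp n q" unfolding okp_def
  proof (intro allI impI)
    fix i assume o: "okb (s @ u)" and i: "0 < i" "i < n"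
    have "count_list (s @ u) (Suc i) \<le> count_list (s @ u) i" using o i by (simp add: okb_def)
    moreover have "count_list u i + count_list v i = a" "count_list u (Suc i) + count_list v (Suc i) = a"
      using cnt i by auto
    ultimately show "count_list q i \<le> count_list q (Suc i)" using h by auto
  qed
qed

lemma key_rep: "tab_word (key (replicate n a)) = yw (\<lambda>_. a) n"
proof -
  have "tab_word (key (replicate n a)) = yw (\<lambda>i. replicate n a ! (i - 1)) n"
    using key_part[of "replicate n a"] by (simp add: sorted_wrt_iff_nth_less)
  also have "\<dots> = yw (\<lambda>_. a) n" by (rule yw_cong) simp
  finally show ?thesis .
qed

lemma key_content:
  assumes "sorted_wrt (\<ge>) (content n u)"
  shows "tab_word (key (content n u)) = yw (count_list u) n"
proof -
  have "tab_word (key (content n u)) = yw (\<lambda>i. content n u ! (i - 1)) n"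
    using key_part[OF assms] by simp
  also have "\<dots> = yw (count_list u) n" by (rule yw_cong) (simp add: content_nth)
  finally show ?thesis .
qed

lemma key_content_ballot:
  assumes "sorted_wrt (\<ge>) (content n u)"
  shows "ballot (tab_word (key (content n u)))"
proof -
  have "tab_word (key (content n u)) = yw (\<lambda>i. content n u ! (i - 1)) n"
    using key_part[OF assms] by simp
  moreover have "ballot (yw (\<lambda>i. content n u ! (i - 1)) n)"
    by (rule yw_ballot) (use sorted_adj[OF assms] in simp)
  ultimately show ?thesis by simp
qed

lemma v_part:
  assumes sv: "set v \<subseteq> {1..n}" and srt: "sorted_wrt (\<le>) (content n v)"
    and pv: "\<forall>q s. v = q @ s \<longrightarrow> okp n q"
  shows "knuth_equiv v (tab_word (key (content n v)))"
proof -
  define w where "w = tab_word (key (content n v))"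
  have ki: "set w \<subseteq> {1..n} \<and> (\<forall>i. 1 \<le> i \<longrightarrow> i \<le> n \<longrightarrow> count_list w i = content n v ! (i - 1))
       \<and> (\<forall>q s. w = q @ s \<longrightarrow> okp n q)"
    unfolding w_def by (rule key_inc[OF srt]) simp
  have sw: "set w \<subseteq> {1..n}" using ki by blast
  have bw: "ballot (rc n w)" using ki ballot_rc[OF sw] by blast
  have bv: "ballot (rc n v)" using pv ballot_rc[OF sv] by blast
  have srv: "set (rc n v) \<subseteq> {1..n}" by (rule rc_set[OF sv])
  have srw: "set (rc n w) \<subseteq> {1..n}" by (rule rc_set[OF sw])
  have e: "yw (count_list (rc n v)) n = yw (count_list (rc n w)) n"
  proof (rule yw_cong)
    fix i assume i: "1 \<le> i" "i \<le> n"
    have "count_list w (Suc n - i) = content n v ! (Suc n - i - 1)" using ki i by auto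
    also have "\<dots> = count_list v (Suc n - i)" using i by (simp add: content_nth Suc_diff_le)
    finally show "count_list (rc n v) i = count_list (rc n w) i"
      using i by (simp add: count_rc[OF sv] count_rc[OF sw])
  qed
  have "knuth_equiv (rc n v) (rc n w)"
    using lemL[OF bv srv] lemL[OF bw srw] e keq_trans keq_sym by metis
  then have "knuth_equiv (rc n (rc n v)) (rc n (rc n w))" using keq_rc[OF _ srv] by blast
  then show ?thesis using rc_rc[OF sv] rc_rc[OF sw] w_def by simp
qed

lemma beta_sorted:
  assumes "sorted_wrt (\<ge>) (content n u)"
    and "\<forall>i. 1 \<le> i \<longrightarrow> i \<le> n \<longrightarrow> count_list u i + count_list v i = a"
  shows "sorted_wrt (\<le>) (content n v)"
  unfolding sorted_wrt_iff_nth_less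
proof (intro allI impI)
  fix i j assume h: "i < j" "j < length (content n v)"
  then have "content n u ! j \<le> content n u ! i" using assms(1) by (auto simp: sorted_wrt_iff_nth_less)
  moreover have "count_list u (Suc i) + count_list v (Suc i) = a" "count_list u (Suc j) + count_list v (Suc j) = a"
    using assms(2) h by auto
  ultimately show "content n v ! i \<le> content n v ! j" using h by (simp add: content_nth)
qed

theorem proposition5p4:
  fixes a n :: nat and u v :: "nat list"
  assumes "0 < a" and "0 < n"
    and "set u \<subseteq> {1..n}" and "set v \<subseteq> {1..n}"
  shows "knuth_equiv (v @ u) (tab_word (key (replicate n a))) \<longleftrightarrow>
         (sorted_wrt (\<ge>) (content n u)
          \<and> map2 (+) (content n u) (content n v) = replicate n a
          \<and> knuth_equiv u (tab_word (key (content n u)))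
          \<and> knuth_equiv v (tab_word (key (content n v))))"
proof
  assume H: "knuth_equiv (v @ u) (tab_word (key (replicate n a)))"
  have H': "knuth_equiv (v @ u) (yw (\<lambda>_. a) n)" using H key_rep by simp
  have bY: "ballot (yw (\<lambda>_. a) n)" by (rule yw_ballot) simp
  have b: "ballot (v @ u)" using keq_ballot[OF H'] bY by simp
  have cnt: "\<forall>i. 1 \<le> i \<longrightarrow> i \<le> n \<longrightarrow> count_list u i + count_list v i = a"
  proof (intro allI impI)
    fix i assume i: "1 \<le> i" "i \<le> n"
    have "count_list (v @ u) i = count_list (yw (\<lambda>_. a) n) i" using keq_count[OF H'] by simp
    then show "count_list u i + count_list v i = a" using i by (simp add: yw_count)
  qed
  have bu: "ballot u" by (rule ballot_suffix[OF b])
  have srt: "sorted_wrt (\<ge>) (content n u)" by (rule okb_sorted[OF ballot_okb[OF bu]])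
  have m2: "map2 (+) (content n u) (content n v) = replicate n a" using cnt map2_iff by blast
  have ku: "knuth_equiv u (tab_word (key (content n u)))"
    using lemL[OF bu assms(3)] key_content[OF srt] by simp
  have kv: "knuth_equiv v (tab_word (key (content n v)))"
    by (rule v_part[OF assms(4) beta_sorted[OF srt cnt] split_v[OF b cnt]])
  show "sorted_wrt (\<ge>) (content n u) \<and> map2 (+) (content n u) (content n v) = replicate n a
          \<and> knuth_equiv u (tab_word (key (content n u))) \<and> knuth_equiv v (tab_word (key (content n v)))"
    using srt m2 ku kv by blast
next
  assume H: "sorted_wrt (\<ge>) (content n u) \<and> map2 (+) (content n u) (content n v) = replicate n a
          \<and> knuth_equiv u (tab_word (key (content n u))) \<and> knuth_equiv v (tab_word (key (content n v)))"
  have srt: "sorted_wrt (\<ge>) (content n u)" using H by blast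
  have cnt: "\<forall>i. 1 \<le> i \<longrightarrow> i \<le> n \<longrightarrow> count_list u i + count_list v i = a" using H map2_iff by blast
  have bu: "ballot u" using keq_ballot[of u] H key_content_ballot[OF srt] by blast
  have srtv: "sorted_wrt (\<le>) (content n v)" by (rule beta_sorted[OF srt cnt])
  define w where "w = tab_word (key (content n v))"
  have ki: "set w \<subseteq> {1..n} \<and> (\<forall>i. 1 \<le> i \<longrightarrow> i \<le> n \<longrightarrow> count_list w i = content n v ! (i - 1))
       \<and> (\<forall>q s. w = q @ s \<longrightarrow> okp n q)"
    unfolding w_def by (rule key_inc[OF srtv]) simp
  have sw: "set w \<subseteq> {1..n}" using ki by blast
  have bw: "ballot (rc n w)" using ki ballot_rc[OF sw] by blast
  have "knuth_equiv (rc n v) (rc n w)" using keq_rc[OF _ assms(4)] H w_def by blast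
  then have "ballot (rc n v)" using keq_ballot bw by blast
  then have pv: "\<forall>q s. v = q @ s \<longrightarrow> okp n q" using ballot_rc[OF assms(4)] by blast
  have b: "ballot (v @ u)" by (rule glue[OF bu pv cnt assms(4,3)])
  have svu: "set (v @ u) \<subseteq> {1..n}" using assms(3,4) by simp
  have "yw (count_list (v @ u)) n = yw (\<lambda>_. a) n"
    by (rule yw_cong) (use cnt in auto)
  then show "knuth_equiv (v @ u) (tab_word (key (replicate n a)))"
    using lemL[OF b svu] key_rep by simp
qed

end
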